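(* Let $1\le p<\infty$, $X=\ell_p(\mathbb Z_+)$, and let $\mathbf u=(u_n)_{n\ge1}$, $\mathbf v=(v_n)_{n\ge1}$ be bounded sequences of non-zero scalars. Assume that either $\liminf_{n\to\infty}\left|\frac{u_1\cdots u_n}{v_1\cdots v_n}\right|=0$ or $\limsup_{n\to\infty}\left|\frac{u_1\cdots u_n}{v_1\cdots v_n}\right|=\infty$. Then whenever $m_{\mathbf u}$ is a $B_{\mathbf u}$-invariant and $m_{\mathbf v}$ a $B_{\mathbf v}$-invariant Borel probability measure on $X$ with $m_{\mathbf u}(\ker e_0^* )=0=m_{\mathbf v}(\ker e_0^* )$, the measures $m_{\mathbf u}$ and $m_{\mathbf v}$ are mutually singular.
   Context: $(e_n)_{n\ge0}$ is the canonical basis of $\ell_p(\mathbb Z_+)$ (over $\mathbb R$ or $\mathbb C$) and $e_0^*$ is the first coordinate functional. For a bounded sequence $\mathbf w$ of non-zero scalars, $B_{\mathbf w}$ is the weighted backward shift $B_{\mathbf w}e_0=0$, $B_{\mathbf w}e_n=w_ne_{n-1}$ ($n\ge1$). Invariance of $m$ under $T$ means $m(T^{-1}(A))=m(A)$ for all Borel $A$. *)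

theory Defs
  imports "HOL-Probability.Probability"
begin

definition lp_space :: "real \<Rightarrow> (nat \<Rightarrow> 'a::real_normed_field) set" where
  "lp_space p = {x. summable (\<lambda>n. norm (x n) powr p)}"

definition lp_norm :: "real \<Rightarrow> (nat \<Rightarrow> 'a::real_normed_field) \<Rightarrow> real" where
  "lp_norm p x = (\<Sum>n. norm (x n) powr p) powr (1 / p)"

definition lp_open :: "real \<Rightarrow> (nat \<Rightarrow> 'a::real_normed_field) set \<Rightarrow> bool" where
  "lp_open p U \<longleftrightarrow> U \<subseteq> lp_space p \<and>
     (\<forall>x\<in>U. \<exists>e>0. \<forall>y\<in>lp_space p. lp_norm p (\<lambda>n. y n - x n) < e \<longrightarrow> y \<in> U)"

definition lp_borel :: "real \<Rightarrow> (nat \<Rightarrow> 'a::real_normed_field) measure" where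
  "lp_borel p = sigma (lp_space p) {U. lp_open p U}"

text \<open>Weighted backward shift: (B_w x)_n = w_(n+1) x_(n+1), i.e. B_w e_0 = 0, B_w e_n = w_n e_(n-1).\<close>
definition bw_shift :: "(nat \<Rightarrow> 'a::real_normed_field) \<Rightarrow> (nat \<Rightarrow> 'a) \<Rightarrow> (nat \<Rightarrow> 'a)" where
  "bw_shift w x = (\<lambda>n. w (Suc n) * x (Suc n))"

text \<open>Admissible weight sequence (w_n)_{n>=1}: bounded, non-zero (w 0 is irrelevant).\<close>
definition weight_seq :: "(nat \<Rightarrow> 'a::real_normed_field) \<Rightarrow> bool" where
  "weight_seq w \<longleftrightarrow> (\<exists>M. \<forall>n\<ge>1. norm (w n) \<le> M) \<and> (\<forall>n\<ge>1. w n \<noteq> 0)"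

definition lp_borel_prob :: "real \<Rightarrow> (nat \<Rightarrow> 'a::real_normed_field) measure \<Rightarrow> bool" where
  "lp_borel_prob p m \<longleftrightarrow> prob_space m \<and> space m = lp_space p \<and> sets m = sets (lp_borel p)"

definition invariant_under :: "('b \<Rightarrow> 'b) \<Rightarrow> 'b measure \<Rightarrow> bool" where
  "invariant_under T m \<longleftrightarrow>
     (\<forall>A\<in>sets m. T -` A \<inter> space m \<in> sets m \<and> emeasure m (T -` A \<inter> space m) = emeasure m A)"

definition mutually_singular :: "'b measure \<Rightarrow> 'b measure \<Rightarrow> bool" where
  "mutually_singular m1 m2 \<longleftrightarrow>
     (\<exists>A\<in>sets m1. A \<in> sets m2 \<and> emeasure m1 A = 0 \<and> emeasure m2 (space m2 - A) = 0)"

end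

theory Submission
  imports Defs
begin



lemma lp_diff:
  assumes "p > 0" "x \<in> lp_space p" "y \<in> lp_space p"
  shows "(\<lambda>n. y n - x n) \<in> lp_space p"
proof -
  have b: "norm (y n - x n) powr p \<le> 2 powr p * (norm (y n) powr p + norm (x n) powr p)" for n
  proof -
    have "norm (y n - x n) \<le> 2 * max (norm (y n)) (norm (x n))"
      using norm_triangle_ineq4[of "y n" "x n"] by linarith
    then have "norm (y n - x n) powr p \<le> (2 * max (norm (y n)) (norm (x n))) powr p"
      using assms(1) by (intro powr_mono2) auto
    also have "\<dots> = 2 powr p * max (norm (y n)) (norm (x n)) powr p"
      by (simp add: powr_mult)
    also have "\<dots> \<le> 2 powr p * (norm (y n) powr p + norm (x n) powr p)"
      by (intro mult_left_mono) (auto simp: max_def)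
    finally show ?thesis .
  qed
  have "summable (\<lambda>n. 2 powr p * (norm (y n) powr p + norm (x n) powr p))"
    using assms(2,3) unfolding lp_space_def by (intro summable_mult summable_add) auto
  then show ?thesis unfolding lp_space_def mem_Collect_eq
    by (rule summable_comparison_test') (use b in auto)
qed

lemma coord_le_lp_norm:
  assumes "p > 0" "z \<in> lp_space p"
  shows "norm (z j) \<le> lp_norm p z"
proof -
  have s: "summable (\<lambda>n. norm (z n) powr p)" using assms unfolding lp_space_def by auto
  have "norm (z j) powr p \<le> (\<Sum>n. norm (z n) powr p)"
    using sum_le_suminf[OF s, of "{j}"] by auto
  then have "(norm (z j) powr p) powr (1/p) \<le> (\<Sum>n. norm (z n) powr p) powr (1/p)"
    using assms(1) by (intro powr_mono2) auto
  then show ?thesis using assms(1) unfolding lp_norm_def by (simp add: powr_powr)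
qed

lemma coord_open:
  assumes "p > 0" "open U"
  shows "lp_open p {x \<in> lp_space p. x j \<in> U}"
  unfolding lp_open_def
proof safe
  fix x assume x: "x \<in> lp_space p" "x j \<in> U"
  then obtain e where e: "e > 0" "ball (x j) e \<subseteq> U" using assms(2) open_contains_ball by blast
  show "\<exists>e>0. \<forall>y\<in>lp_space p. lp_norm p (\<lambda>n. y n - x n) < e \<longrightarrow> y \<in> {x \<in> lp_space p. x j \<in> U}"
  proof (intro exI[of _ e] conjI ballI impI)
    fix y assume y: "y \<in> lp_space p" "lp_norm p (\<lambda>n. y n - x n) < e"
    have "norm (y j - x j) < e"
      using coord_le_lp_norm[OF assms(1) lp_diff[OF assms(1) x(1) y(1)], of j] y(2) by simp
    then have "y j \<in> ball (x j) e" by (simp add: dist_norm norm_minus_commute)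
    then show "y \<in> {x \<in> lp_space p. x j \<in> U}" using e y by auto
  qed (use e in auto)
qed

lemma coord_meas:
  assumes "p > 0" "sets m = sets (lp_borel p)" "space m = lp_space p"
  shows "(\<lambda>x. x j) \<in> borel_measurable m"
proof (rule borel_measurableI)
  fix U :: "'a set" assume "open U"
  have gen: "{U. lp_open p U} \<subseteq> Pow (lp_space p)" by (auto simp: lp_open_def)
  have "{x \<in> lp_space p. x j \<in> U} \<in> sets (lp_borel p)"
    unfolding lp_borel_def sets_measure_of[OF gen]
    using coord_open[OF assms(1) \<open>open U\<close>] by (intro sigma_sets.Basic) auto
  then show "(\<lambda>x. x j) -` U \<inter> space m \<in> sets m" using assms(2,3)
    by (simp add: Int_def conj_commute Collect_conj_eq[symmetric] vimage_def) 
qed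

lemma coord_norm_meas:
  assumes "p > 0" "sets m = sets (lp_borel p)" "space m = lp_space p"
  shows "{x \<in> lp_space p. c * norm (x j) \<le> s} \<in> sets m"
proof -
  have f: "(\<lambda>x. c * norm (x j)) \<in> borel_measurable m"
    using measurable_compose[OF coord_meas[OF assms] borel_measurable_norm]
    by (intro borel_measurable_times borel_measurable_const) (auto simp: o_def)
  have "{x \<in> space m. c * norm (x j) \<le> s} \<in> sets m"
    using f by measurable
  then show ?thesis using assms(3) by simp
qed


lemma shift_lp:
  assumes "p > 0" "weight_seq u" "x \<in> lp_space p"
  shows "bw_shift u x \<in> lp_space p"
proof -
  obtain M where M: "\<And>n. n \<ge> 1 \<Longrightarrow> norm (u n) \<le> M" using assms(2) unfolding weight_seq_def by auto
  have s: "summable (\<lambda>n. norm (x (Suc n)) powr p)"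
    using assms(3) summable_Suc_iff[of "\<lambda>n. norm (x n) powr p"] unfolding lp_space_def by simp
  have b: "norm (norm (u (Suc n) * x (Suc n)) powr p) \<le> M powr p * norm (x (Suc n)) powr p" for n
  proof -
    have "norm (u (Suc n)) powr p \<le> M powr p" using M[of "Suc n"] assms(1) by (intro powr_mono2) auto
    then show ?thesis by (simp add: norm_mult powr_mult mult_right_mono)
  qed
  show ?thesis unfolding lp_space_def bw_shift_def mem_Collect_eq
    by (rule summable_comparison_test'[OF summable_mult[OF s]]) (use b in auto)
qed

lemma inv_iter:
  fixes u :: "nat \<Rightarrow> 'a::real_normed_field"
  assumes "p > 0" "weight_seq u" "sets m = sets (lp_borel p)" "space m = lp_space p"
    "invariant_under (bw_shift u) m"
  shows "emeasure m {x \<in> lp_space p. norm (\<Prod>k=1..n. u k) * norm (x n) \<le> s}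
       = emeasure m {x \<in> lp_space p. norm (x 0) \<le> s}"
proof (induction n)
  case 0 then show ?case by simp
next
  case (Suc n)
  let ?A = "{x \<in> lp_space p. norm (\<Prod>k=1..n. u k) * norm (x n) \<le> s}"
  have A: "?A \<in> sets m" using coord_norm_meas[OF assms(1,3,4)] by blast
  have eq: "bw_shift u -` ?A \<inter> space m = {x \<in> lp_space p. norm (\<Prod>k=1..Suc n. u k) * norm (x (Suc n)) \<le> s}"
    using shift_lp[OF assms(1,2)] assms(4)
    by (auto simp: bw_shift_def prod.nat_ivl_Suc' norm_mult mult.assoc mult.left_commute)
  show ?case using assms(5) A Suc unfolding invariant_under_def eq[symmetric] by auto
qed

lemma halfpow_zero:
  fixes x c :: real
  assumes "0 \<le> x" "\<And>k. x \<le> c * (1/2)^k"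
  shows "x = 0"
proof -
  have "(\<lambda>k. c * (1/2::real)^k) \<longlonglongrightarrow> c * 0"
    by (intro tendsto_mult tendsto_const LIMSEQ_power_zero) auto
  then have "x \<le> c * 0" using assms(2) by (intro LIMSEQ_le_const[of "\<lambda>k. c * (1/2::real)^k" "c*0" x]) auto
  then show ?thesis using assms(1) by simp
qed

lemma core:
  fixes u v :: "nat \<Rightarrow> 'a::{real_normed_field,banach}" and mu mv :: "(nat \<Rightarrow> 'a) measure"
  assumes p: "p > 0" and wu: "weight_seq u" and wv: "weight_seq v"
    and pu: "lp_borel_prob p mu" and pv: "lp_borel_prob p mv"
    and iu: "invariant_under (bw_shift u) mu" and iv: "invariant_under (bw_shift v) mv"
    and z: "emeasure mu {x \<in> lp_space p. x 0 = 0} = 0"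
    and small: "\<And>e. e > 0 \<Longrightarrow> \<exists>n. norm ((\<Prod>k=1..n. u k) / (\<Prod>k=1..n. v k)) < e"
  shows "mutually_singular mu mv"
proof -
  interpret mu: prob_space mu using pu unfolding lp_borel_prob_def by auto
  interpret mv: prob_space mv using pv unfolding lp_borel_prob_def by auto
  define S where "S = (lp_space p :: (nat \<Rightarrow> 'a) set)"
  have smu: "space mu = S" "sets mu = sets (lp_borel p)" using pu unfolding lp_borel_prob_def S_def by auto
  have smv: "space mv = S" "sets mv = sets (lp_borel p)" using pv unfolding lp_borel_prob_def S_def by auto
  define cu where "cu n = (\<Prod>k=1..n. u k)" for n
  define cv where "cv n = (\<Prod>k=1..n. v k)" for n
  define a where "a n = norm (cu n / cv n)" for n
  have cu0: "cu n \<noteq> 0" for n using wu unfolding cu_def weight_seq_def by (auto simp: prod_zero_iff)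
  have cv0: "cv n \<noteq> 0" for n using wv unfolding cv_def weight_seq_def by (auto simp: prod_zero_iff)
  have apos: "a n > 0" for n using cu0 cv0 unfolding a_def by simp
  define B where "B t = {x \<in> S. norm (x 0) \<le> t}" for t
  have Bmu: "B t \<in> sets mu" for t using coord_norm_meas[OF p smu(2) smu(1)[unfolded S_def], of 1 0 t]
    unfolding B_def S_def by simp
  have Bmv: "B t \<in> sets mv" for t using coord_norm_meas[OF p smv(2) smv(1)[unfolded S_def], of 1 0 t]
    unfolding B_def S_def by simp
  have Cmu: "{x \<in> S. c * norm (x j) \<le> s} \<in> sets mu" for c j s
    using coord_norm_meas[OF p smu(2) smu(1)[unfolded S_def]] unfolding S_def by blast
  have Cmv: "{x \<in> S. c * norm (x j) \<le> s} \<in> sets mv" for c j s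
    using coord_norm_meas[OF p smv(2) smv(1)[unfolded S_def]] unfolding S_def by blast
  have invu: "measure mu {x \<in> S. norm (cu n) * norm (x n) \<le> s} = measure mu (B s)" for n s
    using inv_iter[OF p wu smu(2) smu(1)[unfolded S_def] iu, of n s]
    unfolding measure_def cu_def B_def S_def by simp
  have invv: "measure mv {x \<in> S. norm (cv n) * norm (x n) \<le> s} = measure mv (B s)" for n s
    using inv_iter[OF p wv smv(2) smv(1)[unfolded S_def] iv, of n s]
    unfolding measure_def cv_def B_def S_def by simp
  have F1: "\<exists>d>0. measure mu (B d) < e" if e: "e > 0" for e
  proof -
    define D where "D i = B (inverse (real (Suc i)))" for i
    have "decseq D" unfolding decseq_def D_def B_def
      by (auto intro: order_trans[OF _ le_imp_inverse_le])
    then have lim: "(\<lambda>i. measure mu (D i)) \<longlonglongrightarrow> measure mu (\<Inter>i. D i)"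
      using Bmu unfolding D_def by (intro mu.finite_Lim_measure_decseq) auto
    have "(\<Inter>i. D i) = {x \<in> lp_space p. x 0 = 0}"
    proof safe
      fix x assume x: "x \<in> (\<Inter>i. D i)"
      show "x 0 = 0"
      proof (rule ccontr)
        assume "x 0 \<noteq> 0"
        then obtain n where "inverse (real (Suc n)) < norm (x 0)"
          using reals_Archimedean[of "norm (x 0)"] by auto
        moreover have "norm (x 0) \<le> inverse (real (Suc n))" using x unfolding D_def B_def by auto
        ultimately show False by linarith
      qed
    qed (auto simp: D_def B_def S_def)
    moreover have "measure mu {x \<in> lp_space p. x 0 = 0} = 0" using z unfolding measure_def by simp
    ultimately have "(\<lambda>i. measure mu (D i)) \<longlonglongrightarrow> 0" using lim by simp
    then obtain i where "measure mu (D i) < e" using e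
      by (metis (no_types, lifting) LIMSEQ_D abs_of_nonneg measure_nonneg real_norm_def diff_zero order_refl)
    then show ?thesis unfolding D_def by (intro exI[of _ "inverse (real (Suc i))"]) auto
  qed
  have F2: "\<exists>t>0. measure mv (S - B t) < e" if e: "e > 0" for e
  proof -
    define D where "D i = S - B (real (Suc i))" for i
    have "decseq D" unfolding decseq_def D_def B_def by auto
    then have lim: "(\<lambda>i. measure mv (D i)) \<longlonglongrightarrow> measure mv (\<Inter>i. D i)"
      using Bmv smv unfolding D_def by (intro mv.finite_Lim_measure_decseq) auto
    have "(\<Inter>i. D i) = {}"
    proof safe
      fix x assume x: "x \<in> (\<Inter>i. D i)"
      obtain n where "norm (x 0) < real n" using reals_Archimedean2 by blast
      then show "x \<in> {}" using x[unfolded D_def B_def] by (auto dest!: spec[of _ n])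
    qed
    then have "(\<lambda>i. measure mv (D i)) \<longlonglongrightarrow> 0" using lim by simp
    then obtain i where "measure mv (D i) < e" using e
      by (metis (no_types, lifting) LIMSEQ_D abs_of_nonneg measure_nonneg real_norm_def diff_zero order_refl)
    then show ?thesis unfolding D_def by (intro exI[of _ "real (Suc i)"]) auto
  qed
  obtain t where t: "\<And>k. t k > 0 \<and> measure mv (S - B (t k)) < (1/2)^k"
    using F2 choice_iff[where Q="\<lambda>k t. t > 0 \<and> measure mv (S - B t) < (1/2)^k"] by auto
  obtain d where d: "\<And>k. d k > 0 \<and> measure mu (B (d k)) < (1/2)^k"
    using F1 choice_iff[where Q="\<lambda>k d. d > 0 \<and> measure mu (B d) < (1/2)^k"] by auto
  obtain nn where nn: "\<And>k. a (nn k) < d k / t k"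
    using small t d choice_iff[where Q="\<lambda>k n. a n < d k / t k"] unfolding a_def cu_def cv_def by force
  define E where "E k = {x \<in> S. norm (cv (nn k)) * norm (x (nn k)) \<le> t k}" for k
  have Emu: "E k \<in> sets mu" for k unfolding E_def by (rule Cmu)
  have Emv: "E k \<in> sets mv" for k unfolding E_def by (rule Cmv)
  have muE: "measure mu (E k) < (1/2)^k" for k
  proof -
    let ?n = "nn k"
    have "E k = {x \<in> S. norm (cu ?n) * norm (x ?n) \<le> t k * a ?n}"
    proof -
      have "norm (cu ?n) = a ?n * norm (cv ?n)" using cv0 unfolding a_def by (simp add: norm_divide)
      then show ?thesis unfolding E_def using apos[of ?n]
        by (auto simp: mult.assoc mult.commute[of "t k"])
    qed
    then have "measure mu (E k) = measure mu (B (t k * a ?n))" using invu by simp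
    also have "\<dots> \<le> measure mu (B (d k))"
    proof -
      have "t k * a ?n < d k" using nn[of k] t[of k] by (simp add: field_simps)
      then show ?thesis using Bmu by (intro mu.finite_measure_mono) (auto simp: B_def)
    qed
    also have "\<dots> < (1/2)^k" using d by auto
    finally show ?thesis .
  qed
  have mvE: "measure mv (S - E k) < (1/2)^k" for k
  proof -
    have "measure mv (S - E k) = measure mv (S - B (t k))"
      using mv.finite_measure_compl[OF Emv[of k]] mv.finite_measure_compl[OF Bmv[of "t k"]]
        invv[of "nn k" "t k"] smv(1) unfolding E_def by simp
    then show ?thesis using t by simp
  qed
  define A where "A = (\<Union>N. \<Inter>k. E (k + N))"
  have Amu: "A \<in> sets mu" unfolding A_def using Emu by (intro sets.countable_UN sets.countable_INT) auto
  have Amv: "A \<in> sets mv" unfolding A_def using Emv by (intro sets.countable_UN sets.countable_INT) auto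
  have "A \<in> null_sets mu" unfolding A_def
  proof (intro null_sets_UN)
    fix N
    have In: "(\<Inter>k. E (k + N)) \<in> sets mu" using Emu by (intro sets.countable_INT) auto
    have "measure mu (\<Inter>k. E (k + N)) = 0"
    proof (rule halfpow_zero[of _ 1])
      fix k
      have "measure mu (\<Inter>k. E (k + N)) \<le> measure mu (E (k + N))"
        using Emu by (intro mu.finite_measure_mono) auto
      also have "\<dots> \<le> (1/2)^(k+N)" using muE less_imp_le by blast
      also have "\<dots> \<le> (1/2)^k" by (intro power_decreasing) auto
      finally show "measure mu (\<Inter>k. E (k + N)) \<le> 1 * (1/2)^k" by simp
    qed simp
    then show "(\<Inter>k. E (k + N)) \<in> null_sets mu" using In
      by (simp add: null_sets_def mu.emeasure_eq_measure)
  qed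
  then have mu0: "emeasure mu A = 0" by auto
  have "measure mv (S - A) = 0"
  proof (rule halfpow_zero[of _ 2])
    fix N
    have SA: "S - A \<subseteq> (\<Union>k. S - E (k + N))" unfolding A_def by auto
    have sg: "summable (\<lambda>k. (1/2::real)^N * (1/2)^k)" by (intro summable_mult summable_geometric) auto
    have mvE2: "measure mv (S - E (k + N)) \<le> (1/2::real)^N * (1/2)^k" for k
      using mvE[of "k+N"] by (simp add: power_add mult.commute)
    have sm: "summable (\<lambda>k. measure mv (S - E (k + N)))"
      by (rule summable_comparison_test'[OF sg]) (use mvE2 in auto)
    have "measure mv (S - A) \<le> measure mv (\<Union>k. S - E (k + N))"
      using SA Emv smv by (intro mv.finite_measure_mono sets.countable_UN) auto
    also have "\<dots> \<le> (\<Sum>k. measure mv (S - E (k + N)))"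
      using Emv smv sm by (intro mv.finite_measure_subadditive_countably) auto
    also have "\<dots> \<le> (\<Sum>k. (1/2::real)^N * (1/2)^k)"
      by (intro suminf_le sm sg) (use mvE2 in auto)
    also have "\<dots> = 2 * (1/2)^N"
      using suminf_mult[OF summable_geometric[of "1/2::real"], of "(1/2)^N"] suminf_geometric[of "1/2::real"]
      by simp
    finally show "measure mv (S - A) \<le> 2 * (1/2)^N" .
  qed simp
  then have mv0: "emeasure mv (space mv - A) = 0" using smv Amv
    by (simp add: mv.emeasure_eq_measure)
  show ?thesis unfolding mutually_singular_def using Amu Amv mu0 mv0 by blast
qed

theorem proposition3p8:
  fixes p :: real
    and u v :: "nat \<Rightarrow> 'a::{real_normed_field, banach}"
    and mu mv :: "(nat \<Rightarrow> 'a) measure"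
  assumes "1 \<le> p"
    and "weight_seq u" and "weight_seq v"
    and "liminf (\<lambda>n. ereal (norm ((\<Prod>k=1..n. u k) / (\<Prod>k=1..n. v k)))) = 0
         \<or> limsup (\<lambda>n. ereal (norm ((\<Prod>k=1..n. u k) / (\<Prod>k=1..n. v k)))) = \<infinity>"
    and "lp_borel_prob p mu" and "lp_borel_prob p mv"
    and "invariant_under (bw_shift u) mu" and "invariant_under (bw_shift v) mv"
    and "emeasure mu {x \<in> lp_space p. x 0 = 0} = 0"
    and "emeasure mv {x \<in> lp_space p. x 0 = 0} = 0"
  shows "mutually_singular mu mv"
proof -
  have p: "p > 0" using assms(1) by simp
  define cu where "cu n = (\<Prod>k=1..n. u k)" for n
  define cv where "cv n = (\<Prod>k=1..n. v k)" for n
  have cu0: "cu n \<noteq> 0" for n using assms(2) unfolding cu_def weight_seq_def by (auto simp: prod_zero_iff)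
  have cv0: "cv n \<noteq> 0" for n using assms(3) unfolding cv_def weight_seq_def by (auto simp: prod_zero_iff)
  from assms(4) show ?thesis
  proof
    assume L: "liminf (\<lambda>n. ereal (norm ((\<Prod>k=1..n. u k) / (\<Prod>k=1..n. v k)))) = 0"
    show ?thesis
    proof (rule core[OF p assms(2,3,5,6,7,8,9)])
      fix e :: real assume e: "e > 0"
      show "\<exists>n. norm ((\<Prod>k=1..n. u k) / (\<Prod>k=1..n. v k)) < e"
      proof (rule ccontr)
        assume "\<not> ?thesis"
        then have "\<forall>n. e \<le> norm ((\<Prod>k=1..n. u k) / (\<Prod>k=1..n. v k))" by (auto simp: not_less)
        then have "ereal e \<le> liminf (\<lambda>n. ereal (norm ((\<Prod>k=1..n. u k) / (\<Prod>k=1..n. v k))))"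
          unfolding le_Liminf_iff by (auto intro!: always_eventually elim: less_le_trans)
        then show False using L e by simp
      qed
    qed
  next
    assume L: "limsup (\<lambda>n. ereal (norm ((\<Prod>k=1..n. u k) / (\<Prod>k=1..n. v k)))) = \<infinity>"
    have "mutually_singular mv mu"
    proof (rule core[OF p assms(3,2,6,5,8,7,10)])
      fix e :: real assume e: "e > 0"
      show "\<exists>n. norm ((\<Prod>k=1..n. v k) / (\<Prod>k=1..n. u k)) < e"
      proof (rule ccontr)
        assume "\<not> ?thesis"
        then have "\<forall>n. e \<le> norm (cv n / cu n)" by (auto simp: not_less cu_def cv_def)
        then have b: "\<forall>n. norm (cu n / cv n) \<le> 1 / e"
          using cu0 cv0 e by (auto simp: norm_divide field_simps)
        have "limsup (\<lambda>n. ereal (norm ((\<Prod>k=1..n. u k) / (\<Prod>k=1..n. v k)))) \<le> ereal (1 / e)"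
          unfolding Limsup_le_iff using b unfolding cu_def cv_def
          by (auto intro!: always_eventually elim: le_less_trans[rotated])
        then show False using L by simp
      qed
    qed
    then obtain A where A: "A \<in> sets mv" "A \<in> sets mu" "emeasure mv A = 0" "emeasure mu (space mu - A) = 0"
      unfolding mutually_singular_def by blast
    have sp: "space mu = space mv" using assms(5,6) unfolding lp_borel_prob_def by auto
    have "space mv - (space mu - A) = A" using sets.sets_into_space[OF A(1)] sp by auto
    moreover have "space mu - A \<in> sets mu" "space mu - A \<in> sets mv"
      using sets.compl_sets[OF A(2)] sets.compl_sets[OF A(1)] sp by auto
    ultimately show ?thesis unfolding mutually_singular_def using A sp
      by (intro bexI[of _ "space mu - A"]) auto
  qed
qed
end
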